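(* For the imprecise branching strategy applied with the naive credal classifier, the global time complexity of inferring the (partial) prediction of all $m$ labels of an instance is $\mathcal{O}(m^2)$ in the worst case and $\mathcal{O}(m)$ in the best case.
   Context: Multi-label setting with $m$ binary labels $Y_1,\dots,Y_m$ inferred in a chain. For each $j$, with earlier predictions partitioned into relevant indices $\mathscr{I}_{\mathcal{R}}^{j-1}$ (predicted 1), irrelevant $\mathscr{I}_{\mathcal{I}}^{j-1}$ (predicted 0) and abstained $\mathscr{I}_{\mathcal{A}}^{j-1}$, the imprecise branching strategy computes $\underline{P}(Y_j=1)=\min_{\mathbf{y}}\underline{P}(Y_j=1\mid \mathbf{X}=\mathbf{x},Y_{\mathscr{I}_{\mathcal{R}}^{j-1}}=1,Y_{\mathscr{I}_{\mathcal{I}}^{j-1}}=0,Y_{\mathscr{I}_{\mathcal{A}}^{j-1}}=\mathbf{y})$ and $\overline{P}(Y_j=1)$ the corresponding maximum of upper probabilities, over $\mathbf{y}\in\{0,1\}^{|\mathscr{I}_{\mathcal{A}}^{j-1}|}$, and predicts $\hat y_j=1$ if $\underline{P}(Y_j=1)>0.5$, $\hat y_j=0$ if $\overline{P}(Y_j=1)<0.5$, and $\hat y_j=*$ (abstain) otherwise. The conditional probability bounds are those of the naive credal classifier for $Y_j$: features and previous labels are treated as conditionally independent given $Y_j$, $P(Y_j)$ is precise, and each conditional $P(Z=z\mid Y_j=a)$ ranges in $\big[\frac{n(z\mid a)}{n(a)+s},\frac{n(z\mid a)+s}{n(a)+s}\big]$ (imprecise Dirichlet model, counts $n$ from training data,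 hyper-parameter $s>0$); the resulting lower (upper) bound of $P(Y_j=1\mid\cdot)$ is $\big(1+\frac{P(Y_j=0)\,U_0}{P(Y_j=1)\,L_1}\big)^{-1}$ (resp. with $L_0,U_1$), where $U_a$ ($L_a$) is the product over all attributes of the upper (lower) conditional probabilities given $Y_j=a$. *)

theory Defs
  imports Complex_Main
begin

text \<open>A naive credal classifier (NCC) chain for one fixed instance x.
  Labels are indexed 0..m-1; the NCC for label j uses the d observed
  feature values of x and the previous labels k < j as attributes.
  Booleans encode label values (True = 1, False = 0).\<close>

record ncc =
  prior1 :: "nat \<Rightarrow> real"                           \<comment> \<open>precise P(Y_j = 1); P(Y_j = 0) = 1 - prior1 j\<close>
  nlab   :: "nat \<Rightarrow> bool \<Rightarrow> nat"                  \<comment> \<open>n(Y_j = a)\<close>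
  nfeat  :: "nat \<Rightarrow> nat \<Rightarrow> bool \<Rightarrow> nat"           \<comment> \<open>n(X_i = x_i | Y_j = a), j i a\<close>
  nprev  :: "nat \<Rightarrow> nat \<Rightarrow> bool \<Rightarrow> bool \<Rightarrow> nat"   \<comment> \<open>n(Y_k = v | Y_j = a), j k v a\<close>
  nfeats :: nat
  shyp   :: real

definition idm_low :: "nat \<Rightarrow> nat \<Rightarrow> real \<Rightarrow> real" where
  "idm_low n na s = real n / (real na + s)"

definition idm_up :: "nat \<Rightarrow> nat \<Rightarrow> real \<Rightarrow> real" where
  "idm_up n na s = (real n + s) / (real na + s)"

text \<open>L_a and U_a for label j, given a full assignment y of the previous labels
  (length y = j).\<close>
definition Lprod :: "ncc \<Rightarrow> nat \<Rightarrow> bool \<Rightarrow> bool list \<Rightarrow> real" where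
  "Lprod M j a y =
     (\<Prod>i<nfeats M. idm_low (nfeat M j i a) (nlab M j a) (shyp M)) *
     (\<Prod>k<length y. idm_low (nprev M j k (y ! k) a) (nlab M j a) (shyp M))"

definition Uprod :: "ncc \<Rightarrow> nat \<Rightarrow> bool \<Rightarrow> bool list \<Rightarrow> real" where
  "Uprod M j a y =
     (\<Prod>i<nfeats M. idm_up (nfeat M j i a) (nlab M j a) (shyp M)) *
     (\<Prod>k<length y. idm_up (nprev M j k (y ! k) a) (nlab M j a) (shyp M))"

text \<open>(1 + P0 U0/(P1 L1))^-1, written as P1 L1 / (P1 L1 + P0 U0) (same value when
  L1 > 0, and the correct value 0 when L1 = 0).\<close>
definition low_prob :: "ncc \<Rightarrow> nat \<Rightarrow> bool list \<Rightarrow> real" where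
  "low_prob M j y =
     prior1 M j * Lprod M j True y /
     (prior1 M j * Lprod M j True y + (1 - prior1 M j) * Uprod M j False y)"

definition up_prob :: "ncc \<Rightarrow> nat \<Rightarrow> bool list \<Rightarrow> real" where
  "up_prob M j y =
     prior1 M j * Uprod M j True y /
     (prior1 M j * Uprod M j True y + (1 - prior1 M j) * Lprod M j False y)"

text \<open>Earlier predictions: Some True (relevant), Some False (irrelevant), None (abstained).
  Completions: all assignments agreeing with the determinate predictions.\<close>
definition completions :: "bool option list \<Rightarrow> bool list set" where
  "completions h = {y. length y = length h \<and>
                       (\<forall>k<length h. \<forall>v. h ! k = Some v \<longrightarrow> y ! k = v)}"

definition lower_bound :: "ncc \<Rightarrow> bool option list \<Rightarrow> real" where
  "lower_bound M h = Min (low_prob M (length h) ` completions h)"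

definition upper_bound :: "ncc \<Rightarrow> bool option list \<Rightarrow> real" where
  "upper_bound M h = Max (up_prob M (length h) ` completions h)"

definition decide :: "real \<Rightarrow> real \<Rightarrow> bool option" where
  "decide lo up = (if lo > 1/2 then Some True else if up < 1/2 then Some False else None)"

text \<open>Specification: the imprecise branching strategy (predictions of labels 0..m-1).\<close>
fun ib_preds :: "ncc \<Rightarrow> nat \<Rightarrow> bool option list" where
  "ib_preds M 0 = []"
| "ib_preds M (Suc j) =
     (let h = ib_preds M j in h @ [decide (lower_bound M h) (upper_bound M h)])"

text \<open>Efficient algorithm for the NCC: each abstained previous label is optimised
  independently by one comparison (for the lower bound and one for the upper bound).\<close>
definition pick_low :: "ncc \<Rightarrow> nat \<Rightarrow> nat \<Rightarrow> bool" where
  "pick_low M j k = (let s = shyp M;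
      u0 = (\<lambda>v. idm_up (nprev M j k v False) (nlab M j False) s);
      l1 = (\<lambda>v. idm_low (nprev M j k v True) (nlab M j True) s)
    in \<not> (u0 False * l1 True \<ge> u0 True * l1 False))"

definition pick_up :: "ncc \<Rightarrow> nat \<Rightarrow> nat \<Rightarrow> bool" where
  "pick_up M j k = (let s = shyp M;
      u1 = (\<lambda>v. idm_up (nprev M j k v True) (nlab M j True) s);
      l0 = (\<lambda>v. idm_low (nprev M j k v False) (nlab M j False) s)
    in \<not> (u1 False * l0 True \<ge> u1 True * l0 False))"

definition fill :: "(nat \<Rightarrow> bool) \<Rightarrow> bool option list \<Rightarrow> bool list" where
  "fill pick h = map (\<lambda>k. case h ! k of Some v \<Rightarrow> v | None \<Rightarrow> pick k) [0..<length h]"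

text \<open>One step: prediction and its cost (2 bound evaluations plus 2 comparisons per
  abstained earlier label).\<close>
definition fast_step :: "ncc \<Rightarrow> bool option list \<Rightarrow> bool option \<times> nat" where
  "fast_step M h =
     (let j = length h in
      (decide (low_prob M j (fill (pick_low M j) h)) (up_prob M j (fill (pick_up M j) h)),
       2 + 2 * length (filter (\<lambda>q. q = None) h)))"

fun ib_fast :: "ncc \<Rightarrow> nat \<Rightarrow> bool option list \<times> nat" where
  "ib_fast M 0 = ([], 0)"
| "ib_fast M (Suc j) =
     (let (h, c) = ib_fast M j; (p, c') = fast_step M h in (h @ [p], c + c'))"

end

theory Submission imports Defs begin
lemma L1: fixes a a' b b' c d :: real
 assumes "c\<ge>0" "d\<ge>0" "a\<ge>0" "a'\<ge>0" "b>0" "b'>0" "a*b' \<le> a'*b"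
 shows "c*a/(c*a+d*b) \<le> c*a'/(c*a'+d*b')"
proof (cases "c*a'+d*b' = 0")
  case True
  have "d*b' = 0" "c*a' = 0" using True assms by (smt (verit) mult_nonneg_nonneg)+
  hence "d = 0" using assms by simp
  show ?thesis
  proof (cases "c = 0")
    case False
    hence "a' = 0" using \<open>c*a'=0\<close> by simp
    hence "a*b' \<le> 0" using assms by simp
    hence "a = 0" using assms by (smt (verit) mult_pos_pos)
    thus ?thesis using True by simp
  qed simp
next
  case F: False
  have p1: "c*a'+d*b' > 0" using F assms by (smt (verit) mult_nonneg_nonneg)
  show ?thesis
  proof (cases "c*a+d*b = 0")
    case True thus ?thesis using p1 assms by simp
  next
    case False
    have p2: "c*a+d*b > 0" using False assms by (smt (verit) mult_nonneg_nonneg)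
    have "(c*d)*(a*b') \<le> (c*d)*(a'*b)" using assms by (intro mult_left_mono) auto
    hence "c*a*(c*a'+d*b') \<le> c*a'*(c*a+d*b)" by (simp add: algebra_simps)
    thus ?thesis using p1 p2 by (simp add: divide_simps)
  qed
qed
lemma L2: fixes a a' b b' c d :: real
 assumes "c\<ge>0" "d\<ge>0" "a>0" "a'>0" "b\<ge>0" "b'\<ge>0" "a'*b \<le> a*b'"
 shows "c*a'/(c*a'+d*b') \<le> c*a/(c*a+d*b)"
proof (cases "c*a+d*b = 0")
  case True
  have "d*b = 0" "c*a = 0" using True assms by (smt (verit) mult_nonneg_nonneg)+
  hence "c = 0" using assms by simp
  thus ?thesis by simp
next
  case F: False
  have p1: "c*a+d*b > 0" using F assms by (smt (verit) mult_nonneg_nonneg)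
  show ?thesis
  proof (cases "c*a'+d*b' = 0")
    case True thus ?thesis using p1 assms by simp
  next
    case False
    have p2: "c*a'+d*b' > 0" using False assms by (smt (verit) mult_nonneg_nonneg)
    have "(c*d)*(a'*b) \<le> (c*d)*(a*b')" using assms by (intro mult_left_mono) auto
    hence "c*a'*(c*a+d*b) \<le> c*a*(c*a'+d*b')" by (simp add: algebra_simps)
    thus ?thesis using p1 p2 by (simp add: divide_simps)
  qed
qed
lemma fill_nth: "k < length h \<Longrightarrow> fill p h ! k = (case h!k of Some v \<Rightarrow> v | None \<Rightarrow> p k)"
proof -
  assume k: "k < length h"
  hence e1: "[0..<length h] ! k = k" by (simp only: nth_upt)
  have e2: "fill p h ! k = (\<lambda>k. case h ! k of Some v \<Rightarrow> v | None \<Rightarrow> p k) ([0..<length h] ! k)"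
    unfolding fill_def using k by (intro nth_map) simp
  show ?thesis unfolding e2 e1 by (rule refl)
qed

lemma fill_len[simp]: "length (fill p h) = length h"
  by (simp add: fill_def)

lemma fill_compl: "fill p h \<in> completions h"
  by (auto simp: completions_def fill_nth)

lemma compl_finite: "finite (completions h)"
proof -
  have "completions h \<subseteq> {xs. set xs \<subseteq> (UNIV::bool set) \<and> length xs = length h}"
    by (auto simp: completions_def)
  thus ?thesis by (rule finite_subset) (rule finite_lists_length_eq, simp)
qed

lemma prod_fill:
  fixes l u :: "nat \<Rightarrow> bool \<Rightarrow> real"
  assumes y: "y \<in> completions h"
  and nl: "\<And>k v. 0 \<le> l k v" and nu: "\<And>k v. 0 \<le> u k v"
  and pk: "\<And>k v. k < length h \<Longrightarrow> h!k = None \<Longrightarrow> l k (p k) * u k v \<le> l k v * u k (p k)"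
  shows "(\<Prod>k<length h. l k (fill p h ! k)) * (\<Prod>k<length h. u k (y!k))
         \<le> (\<Prod>k<length h. l k (y!k)) * (\<Prod>k<length h. u k (fill p h ! k))"
proof -
  have "(\<Prod>k<length h. l k (fill p h ! k) * u k (y!k)) \<le> (\<Prod>k<length h. l k (y!k) * u k (fill p h ! k))"
  proof (rule prod_mono)
    fix k assume "k \<in> {..<length h}"
    hence k: "k < length h" by simp
    show "0 \<le> l k (fill p h ! k) * u k (y!k) \<and> l k (fill p h ! k) * u k (y!k) \<le> l k (y!k) * u k (fill p h ! k)"
    proof (cases "h!k")
      case None thus ?thesis using k pk[of k "y!k"] nl nu by (simp add: fill_nth)
    next
      case (Some v)
      hence "y!k = v" using y k by (auto simp: completions_def)
      thus ?thesis using Some k nl nu by (simp add: fill_nth)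
    qed
  qed
  thus ?thesis by (simp add: prod.distrib)
qed

lemma pick_gen:
  fixes l u :: "bool \<Rightarrow> real"
  shows "l (\<not> (u False * l True \<ge> u True * l False)) * u v \<le> l v * u (\<not> (u False * l True \<ge> u True * l False))"
  by (cases v; cases "u False * l True \<ge> u True * l False") (auto simp: mult.commute)

lemma idm_up_pos: "s > 0 \<Longrightarrow> idm_up n na s > 0"
  by (simp add: idm_up_def)

lemma idm_low_nn: "s > 0 \<Longrightarrow> idm_low n na s \<ge> 0"
  by (simp add: idm_low_def)

lemma lower_ok:
  assumes s: "shyp M > 0" and pr: "0 \<le> prior1 M (length h)" "prior1 M (length h) \<le> 1"
  shows "lower_bound M h = low_prob M (length h) (fill (pick_low M (length h)) h)"
proof -
  define j where "j = length h"
  define l1 where "l1 = (\<lambda>k v. idm_low (nprev M j k v True) (nlab M j True) (shyp M))"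
  define u0 where "u0 = (\<lambda>k v. idm_up (nprev M j k v False) (nlab M j False) (shyp M))"
  define LF where "LF = (\<Prod>i<nfeats M. idm_low (nfeat M j i True) (nlab M j True) (shyp M))"
  define UF where "UF = (\<Prod>i<nfeats M. idm_up (nfeat M j i False) (nlab M j False) (shyp M))"
  define f where "f = fill (pick_low M j) h"
  have LF: "LF \<ge> 0" unfolding LF_def using s by (intro prod_nonneg) (simp add: idm_low_nn)
  have UF: "UF > 0" unfolding UF_def using s by (intro prod_pos) (simp add: idm_up_pos)
  have nl: "\<And>k v. 0 \<le> l1 k v" unfolding l1_def using s by (simp add: idm_low_nn)
  have pu: "\<And>k v. 0 < u0 k v" unfolding u0_def using s by (simp add: idm_up_pos)
  have lp: "\<And>y. length y = j \<Longrightarrow> low_prob M j y =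
     (prior1 M j * LF) * (\<Prod>k<j. l1 k (y!k)) /
     ((prior1 M j * LF) * (\<Prod>k<j. l1 k (y!k)) + ((1 - prior1 M j) * UF) * (\<Prod>k<j. u0 k (y!k)))"
    by (simp add: low_prob_def Lprod_def Uprod_def l1_def u0_def LF_def UF_def mult.assoc)
  have key: "low_prob M j f \<le> low_prob M j y" if y: "y \<in> completions h" for y
  proof -
    have ly: "length y = j" using y by (simp add: completions_def j_def)
    have pi: "(\<Prod>k<j. l1 k (f!k)) * (\<Prod>k<j. u0 k (y!k)) \<le> (\<Prod>k<j. l1 k (y!k)) * (\<Prod>k<j. u0 k (f!k))"
      unfolding j_def f_def
    proof (rule prod_fill[OF y nl])
      show "\<And>k v. 0 \<le> u0 k v" using pu less_imp_le by blast
      fix k v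
      show "l1 k (pick_low M (length h) k) * u0 k v \<le> l1 k v * u0 k (pick_low M (length h) k)"
        unfolding pick_low_def Let_def l1_def u0_def j_def
        by (rule pick_gen[of "\<lambda>v. idm_low (nprev M (length h) k v True) (nlab M (length h) True) (shyp M)"
                          "\<lambda>v. idm_up (nprev M (length h) k v False) (nlab M (length h) False) (shyp M)", simplified])
    qed
    show ?thesis
      unfolding lp[OF ly] lp[of f, unfolded f_def, simplified, folded f_def, OF j_def[symmetric]]
      apply (rule L1)
      using pr LF UF nl pu pi unfolding j_def
      by (auto intro: mult_nonneg_nonneg prod_nonneg prod_pos less_imp_le)
  qed
  show ?thesis unfolding lower_bound_def
    by (rule Min_eqI) (use compl_finite fill_compl key in \<open>auto simp: j_def f_def\<close>)
qed


lemma upper_ok: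
  assumes s: "shyp M > 0" and pr: "0 \<le> prior1 M (length h)" "prior1 M (length h) \<le> 1"
  shows "upper_bound M h = up_prob M (length h) (fill (pick_up M (length h)) h)"
proof -
  define j where "j = length h"
  define u1 where "u1 = (\<lambda>k v. idm_up (nprev M j k v True) (nlab M j True) (shyp M))"
  define l0 where "l0 = (\<lambda>k v. idm_low (nprev M j k v False) (nlab M j False) (shyp M))"
  define UF where "UF = (\<Prod>i<nfeats M. idm_up (nfeat M j i True) (nlab M j True) (shyp M))"
  define LF where "LF = (\<Prod>i<nfeats M. idm_low (nfeat M j i False) (nlab M j False) (shyp M))"
  define f where "f = fill (pick_up M j) h"
  have LF: "LF \<ge> 0" unfolding LF_def using s by (intro prod_nonneg) (simp add: idm_low_nn)
  have UF: "UF > 0" unfolding UF_def using s by (intro prod_pos) (simp add: idm_up_pos)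
  have nl: "\<And>k v. 0 \<le> l0 k v" unfolding l0_def using s by (simp add: idm_low_nn)
  have pu: "\<And>k v. 0 < u1 k v" unfolding u1_def using s by (simp add: idm_up_pos)
  have up: "\<And>y. length y = j \<Longrightarrow> up_prob M j y =
     (prior1 M j * UF) * (\<Prod>k<j. u1 k (y!k)) /
     ((prior1 M j * UF) * (\<Prod>k<j. u1 k (y!k)) + ((1 - prior1 M j) * LF) * (\<Prod>k<j. l0 k (y!k)))"
    by (simp add: up_prob_def Lprod_def Uprod_def l0_def u1_def LF_def UF_def mult.assoc)
  have key: "up_prob M j y \<le> up_prob M j f" if y: "y \<in> completions h" for y
  proof -
    have ly: "length y = j" using y by (simp add: completions_def j_def)
    have pi: "(\<Prod>k<j. l0 k (f!k)) * (\<Prod>k<j. u1 k (y!k)) \<le> (\<Prod>k<j. l0 k (y!k)) * (\<Prod>k<j. u1 k (f!k))"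
      unfolding j_def f_def
    proof (rule prod_fill[OF y nl])
      show "\<And>k v. 0 \<le> u1 k v" using pu less_imp_le by blast
      fix k v
      show "l0 k (pick_up M (length h) k) * u1 k v \<le> l0 k v * u1 k (pick_up M (length h) k)"
        unfolding pick_up_def Let_def l0_def u1_def j_def
        by (rule pick_gen[of "\<lambda>v. idm_low (nprev M (length h) k v False) (nlab M (length h) False) (shyp M)"
                          "\<lambda>v. idm_up (nprev M (length h) k v True) (nlab M (length h) True) (shyp M)", simplified])
    qed
    have pi': "(\<Prod>k<j. u1 k (y!k)) * (\<Prod>k<j. l0 k (f!k)) \<le> (\<Prod>k<j. u1 k (f!k)) * (\<Prod>k<j. l0 k (y!k))"
      using pi by (simp add: mult.commute)
    show ?thesis
      unfolding up[OF ly] up[of f, unfolded f_def, simplified, folded f_def, OF j_def[symmetric]]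
      apply (rule L2)
      using pr UF LF nl pu pi' unfolding j_def
      by (auto intro: mult_nonneg_nonneg prod_nonneg prod_pos less_imp_le)
  qed
  show ?thesis unfolding upper_bound_def
    by (rule Max_eqI) (use compl_finite fill_compl key in \<open>auto simp: j_def f_def\<close>)
qed

lemma fast_step_eq:
  assumes s: "shyp M > 0" and pr: "\<forall>j. 0 \<le> prior1 M j \<and> prior1 M j \<le> 1"
  shows "fast_step M h = (decide (lower_bound M h) (upper_bound M h), 2 + 2 * length (filter (\<lambda>q. q = None) h))"
  using lower_ok[OF s] upper_ok[OF s] pr by (simp add: fast_step_def Let_def)

lemma main_ind:
  assumes s: "shyp M > 0" and pr: "\<forall>j. 0 \<le> prior1 M j \<and> prior1 M j \<le> 1"
  shows "fst (ib_fast M m) = ib_preds M m \<and> length (ib_preds M m) = m \<and>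
         snd (ib_fast M m) \<le> 2*m + 2*m*length (filter (\<lambda>q. q = None) (ib_preds M m))"
proof (induction m)
  case 0 thus ?case by simp
next
  case (Suc m)
  obtain h c where hc: "ib_fast M m = (h, c)" by (cases "ib_fast M m")
  define n where "n = length (filter (\<lambda>q. q = None) h)"
  define p where "p = decide (lower_bound M h) (upper_bound M h)"
  have IH: "h = ib_preds M m" "length h = m" "c \<le> 2*m + 2*m*n" using Suc hc n_def by auto
  have n': "n \<le> length (filter (\<lambda>q. q = None) (h @ [p]))" unfolding n_def by simp
  have e: "ib_fast M (Suc m) = (h @ [p], c + (2 + 2*n))"
    using hc fast_step_eq[OF s pr, of h] by (simp add: p_def n_def)
  have e2: "ib_preds M (Suc m) = h @ [p]" using IH by (simp add: p_def Let_def)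
  have "2*m*n \<le> 2*m*length (filter (\<lambda>q. q = None) (h @ [p]))" using n' by simp
  moreover have "2*n \<le> 2*length (filter (\<lambda>q. q = None) (h @ [p]))" using n' by simp
  ultimately show ?case unfolding e e2 using IH by (simp add: algebra_simps)
qed

theorem proposition3:
  shows "\<exists>C::nat. \<forall>(M::ncc) (m::nat).
           shyp M > 0 \<and> (\<forall>j. 0 \<le> prior1 M j \<and> prior1 M j \<le> 1) \<longrightarrow>
             fst (ib_fast M m) = ib_preds M m \<and>
             snd (ib_fast M m) \<le> C * m\<^sup>2 \<and>
             (None \<notin> set (ib_preds M m) \<longrightarrow> snd (ib_fast M m) \<le> C * m)"
proof (intro exI[of _ 4] allI impI)
  fix M :: ncc and m :: nat
  assume a: "shyp M > 0 \<and> (\<forall>j. 0 \<le> prior1 M j \<and> prior1 M j \<le> 1)"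
  define n where "n = length (filter (\<lambda>q. q = None) (ib_preds M m))"
  have I: "fst (ib_fast M m) = ib_preds M m" "length (ib_preds M m) = m"
          "snd (ib_fast M m) \<le> 2*m + 2*m*n"
    using main_ind[of M m] a n_def by auto
  have nm: "n \<le> m" unfolding n_def using I(2) by (metis length_filter_le)
  have "2*m*n \<le> 2*m*m" using nm by simp
  moreover have "m \<le> m*m" by (cases m) auto
  ultimately have q0: "snd (ib_fast M m) \<le> 4 * (m*m)" using I(3) by linarith
  hence q: "snd (ib_fast M m) \<le> 4 * m\<^sup>2" by (simp add: power2_eq_square)
  have "None \<notin> set (ib_preds M m) \<longrightarrow> snd (ib_fast M m) \<le> 4 * m"
  proof
    assume "None \<notin> set (ib_preds M m)"
    hence "n = 0" unfolding n_def by (metis (mono_tags, lifting) filter_False length_0_conv)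
    thus "snd (ib_fast M m) \<le> 4 * m" using I(3) by simp
  qed
  thus "fst (ib_fast M m) = ib_preds M m \<and> snd (ib_fast M m) \<le> 4 * m\<^sup>2 \<and>
        (None \<notin> set (ib_preds M m) \<longrightarrow> snd (ib_fast M m) \<le> 4 * m)" using I(1) q by blast
qed

end
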